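(* Let $p\in W^{1,\infty}(\mathbb{R}^+\times\mathbb{R}^+)$ with $p\ge0$, $\gamma:=\operatorname{ess\,sup}\partial_Np$, and let $(n^0_j)_{j\ge1}$ be nonnegative with $\|n^0\|_1<\infty$, $\|n^0\|_\infty<\infty$, $\gamma\|n^0\|_1<1$ and $TV(n^0)<\infty$. Consider the ITM upwind scheme under the CFL condition (with $N^m$ the unique solution of its fixed-point equation). Then there exist constants $C_1,C_2>0$ depending only on $p$, $\|n^0\|_1$ and $\|n^0\|_\infty$ (and not on $\Delta t,\Delta s,m$) such that for every $m\in\mathbb{N}$, with $T=m\Delta t$, $$TV(n^m)\le e^{C_1T}\,TV(n^0)+C_2\left(e^{C_1T}-1\right).$$
   Context: ITM upwind scheme: fix $\Delta s,\Delta t>0$; set $s_j=(j-\tfrac12)\Delta s$ for $j\in\{1,2,\dots\}$ and $t^m=m\Delta t$. For a sequence $u=(u_j)_{j\ge1}$, $\|u\|_1=\sum_{j\ge1}\Delta s|u_j|$, $\|u\|_\infty=\sup_j|u_j|$. Given nonnegative initial values $(n^0_j)_{j\ge1}$, for $m=0,1,2,\dots$: $N^m\ge0$ is a solution of $N^m=\sum_{j\ge1}\Delta s\,p(s_j,N^m)\,n^m_j$, one sets $n^m_0:=N^m$, and $n^{m+1}_j=n^m_j-\frac{\Delta t}{\Delta s}(n^m_j-n^m_{j-1})-\Delta t\,p(s_j,N^m)\,n^m_j$ for $j\ge1$. CFL condition: $\Delta t\le(\frac{1}{\Delta s}+\|p\|_\infty)^{-1}$. Under $\gamma\|n^0\|_1<1$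 the fixed-point equation for $N^m$ has a unique nonnegative solution for every $m$. Discrete total variation (including the boundary value): $TV(n^m)=\sum_{j\ge0}|n^m_{j+1}-n^m_j|$ with $n^m_0=N^m$. $\gamma$ is the essential supremum of $\partial_N p$. *)

theory Defs
  imports "HOL-Analysis.Analysis" "HOL-Probability.Probability"
begin

definition quadrant :: "(real \<times> real) set" where
  "quadrant = {0..} \<times> {0..}"

text \<open>Partial derivative of p in N (where it exists; 0 on the null set where it does not).\<close>
definition partialN :: "(real \<Rightarrow> real \<Rightarrow> real) \<Rightarrow> real \<times> real \<Rightarrow> real" where
  "partialN p x = (if (\<lambda>y. p (fst x) y) differentiable (at (snd x))
                   then deriv (\<lambda>y. p (fst x) y) (snd x) else 0)"

definition gammaP :: "(real \<Rightarrow> real \<Rightarrow> real) \<Rightarrow> ereal" where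
  "gammaP p = esssup (restrict_space lborel ({0<..} \<times> {0<..})) (\<lambda>x. ereal (partialN p x))"

definition supnormP :: "(real \<Rightarrow> real \<Rightarrow> real) \<Rightarrow> real" where
  "supnormP p = (SUP x\<in>quadrant. \<bar>p (fst x) (snd x)\<bar>)"

definition sgrid :: "real \<Rightarrow> nat \<Rightarrow> real" where
  "sgrid ds j = (real j - 1/2) * ds"

text \<open>Discrete total variation including the boundary value u 0.\<close>
definition discTV :: "(nat \<Rightarrow> real) \<Rightarrow> ennreal" where
  "discTV u = (\<Sum>j. ennreal \<bar>u (Suc j) - u j\<bar>)"

end

theory Submission
  imports Defs
begin

definition Eset :: "(real \<Rightarrow> real) \<Rightarrow> real \<Rightarrow> real \<Rightarrow> real \<Rightarrow> real \<Rightarrow> real set" where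
  "Eset f r R a b = {x \<in> {a<..<b}. (\<forall>e>0. \<exists>t. 0 < t \<and> t < e \<and> f x - f (x - t) < r * t)
                                   \<and> (\<forall>e>0. \<exists>t. 0 < t \<and> t < e \<and> R * t < f (x + t) - f x)}"

lemma all_e_nat:
  "(\<forall>e>0. \<exists>t. 0 < t \<and> t < e \<and> P t) \<longleftrightarrow> (\<forall>n::nat. \<exists>t. 0 < t \<and> t < 1 / Suc n \<and> P t)"
proof
  assume "\<forall>n::nat. \<exists>t. 0 < t \<and> t < 1 / Suc n \<and> P t"
  then show "\<forall>e>0. \<exists>t. 0 < t \<and> t < e \<and> P t"
    by (metis less_trans nat_approx_posE)
qed auto

lemma Eset_borel:
  assumes cont: "continuous_on UNIV f"
  shows "Eset f r R a b \<in> sets borel"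
proof -
  define O1 where "O1 n = (\<Union>t\<in>{0<..<1 / Suc n}. {x. f x - f (x - t) < r * t})" for n :: nat
  define O2 where "O2 n = (\<Union>t\<in>{0<..<1 / Suc n}. {x. R * t < f (x + t) - f x})" for n :: nat
  have c1: "continuous_on UNIV (\<lambda>x. f x - f (x - t))" for t
    by (intro continuous_intros continuous_on_compose2[OF cont]) auto
  have c2: "continuous_on UNIV (\<lambda>x. f (x + t) - f x)" for t
    by (intro continuous_intros continuous_on_compose2[OF cont]) auto
  have o1: "open (O1 n)" for n unfolding O1_def
    by (intro open_UN ballI open_Collect_less c1 continuous_intros)
  have o2: "open (O2 n)" for n unfolding O2_def
    by (intro open_UN ballI open_Collect_less c2 continuous_intros)
  have "Eset f r R a b = {a<..<b} \<inter> (\<Inter>n. O1 n) \<inter> (\<Inter>n. O2 n)"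
    unfolding Eset_def O1_def O2_def
    apply (subst all_e_nat)+
    by (auto simp: Bex_def)
  also have "\<dots> \<in> sets borel" using o1 o2 by auto
  finally show ?thesis .
qed

lemma null_of_negligible:
  assumes "negligible Z" obtains Z' where "Z' \<in> null_sets lborel" "Z \<subseteq> Z'"
  using assms unfolding negligible_iff_null_sets null_sets_completion_iff2 by blast

lemma Eset_null:
  fixes f :: "real \<Rightarrow> real"
  assumes mono: "mono f" and cont: "continuous_on UNIV f" and r: "0 < r" "r < R"
  shows "emeasure lborel (Eset f r R a b) = 0"
proof -
  define E where "E = Eset f r R a b"
  have Eb[measurable]: "E \<in> sets borel" using Eset_borel[OF cont] E_def by simp
  let ?mu = "interval_measure f"
  have rc: "continuous (at_right x) f" for x
  proof -
    have "continuous (at x within UNIV) f" using cont continuous_on_eq_continuous_within by blast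
    then show ?thesis using continuous_within_subset[of x UNIV f "{x<..}"] by simp
  qed
  have muIoc: "emeasure ?mu {x<..y} = ennreal (f y - f x)" if "x \<le> y" for x y
    using emeasure_interval_measure_Ioc[OF that _ rc] mono by (simp add: monoD)
  have Efin: "emeasure lborel E < \<infinity>"
  proof -
    have "emeasure lborel E \<le> emeasure lborel {a..b}"
      by (rule emeasure_mono) (auto simp: E_def Eset_def)
    also have "\<dots> < \<infinity>" by (simp add: emeasure_lborel_Icc_eq)
    finally show ?thesis .
  qed
  define m where "m = measure lborel E"
  have Em: "emeasure lborel E = ennreal m" using Efin unfolding m_def by (simp add: emeasure_eq_ennreal_measure)
  have m0: "m \<ge> 0" unfolding m_def by simp
  have key: "R * m \<le> r * (m + e)" if e: "e > 0" for e
  proof -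
    obtain U where U: "open U" "E \<subseteq> U" "emeasure lborel (U - E) < e"
      using outer_regular_lborel[OF Eb e] by blast
    have Ub[measurable]: "U \<in> sets borel" using U(1) by auto
    have lamU: "emeasure lborel U \<le> ennreal (m + e)"
    proof -
      have "emeasure lborel U = emeasure lborel E + emeasure lborel (U - E)"
        using U(2) by (subst plus_emeasure) (auto intro!: arg_cong[where f="emeasure lborel"])
      also have "\<dots> \<le> ennreal m + ennreal e" using Em U(3) by simp
      also have "\<dots> = ennreal (m + e)" using m0 e by (simp add: ennreal_plus)
      finally show ?thesis .
    qed
    define K1 where "K1 = {i. fst i \<in> E \<and> 0 < snd i \<and> {fst i - snd i .. fst i} \<subseteq> U \<and> f (fst i) - f (fst i - snd i) < r * snd i}"
    define a1 where "a1 i = fst i - snd i / 2" for i :: "real \<times> real"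
    define r1 where "r1 i = snd i / 2" for i :: "real \<times> real"
    have cb1: "cball (a1 i) (r1 i) = {fst i - snd i .. fst i}" for i
      by (simp add: cball_eq_atLeastAtMost a1_def r1_def)
    have bl1: "ball (a1 i) (r1 i) = {fst i - snd i <..< fst i}" for i
      by (simp add: ball_eq_greaterThanLessThan a1_def r1_def)
    obtain C1 where C1: "countable C1" "C1 \<subseteq> K1"
      "pairwise (\<lambda>i j. disjnt (cball (a1 i) (r1 i)) (cball (a1 j) (r1 j))) C1"
      "negligible (E - (\<Union>i\<in>C1. cball (a1 i) (r1 i)))"
    proof (rule Vitali_covering_theorem_cballs[of K1 r1 E a1])
      show "\<And>i. i \<in> K1 \<Longrightarrow> 0 < r1 i" by (auto simp: K1_def r1_def)
      fix x d :: real assume x: "x \<in> E" and d: "0 < d"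
      obtain e0 where e0: "e0 > 0" "ball x e0 \<subseteq> U" using U(1,2) x open_contains_ball by blast
      have md: "min e0 d > 0" using e0 d by simp
      have "\<forall>e>0. \<exists>t. 0 < t \<and> t < e \<and> f x - f (x - t) < r * t" using x unfolding E_def Eset_def by blast
      then obtain t where t: "0 < t" "t < min e0 d" "f x - f (x - t) < r * t"
        using md by blast
      have "{x - t .. x} \<subseteq> U" using e0(2) t by (auto simp: dist_real_def subset_eq)
      then show "\<exists>i. i \<in> K1 \<and> x \<in> cball (a1 i) (r1 i) \<and> r1 i < d"
        using t x by (intro exI[of _ "(x, t)"]) (auto simp: K1_def r1_def a1_def dist_real_def)
    qed blast
    define J1 where "J1 i = {fst i - snd i <.. fst i}" for i :: "real \<times> real"
    have J1c: "J1 i \<subseteq> cball (a1 i) (r1 i)" for i by (auto simp: J1_def cb1)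
    have dJ1: "disjoint_family_on J1 C1"
    proof (unfold disjoint_family_on_def, intro ballI impI)
      fix i j assume ij: "i \<in> C1" "j \<in> C1" "i \<noteq> j"
      then have "disjnt (cball (a1 i) (r1 i)) (cball (a1 j) (r1 j))" using C1(3) unfolding pairwise_def by blast
      then show "J1 i \<inter> J1 j = {}" using J1c[of i] J1c[of j] unfolding disjnt_def by blast
    qed
    have J1U: "(\<Union>i\<in>C1. J1 i) \<subseteq> U"
    proof
      fix y assume "y \<in> (\<Union>i\<in>C1. J1 i)"
      then obtain i where i: "i \<in> C1" "y \<in> J1 i" by blast
      then have "{fst i - snd i .. fst i} \<subseteq> U" using C1(2) by (auto simp: K1_def)
      moreover have "y \<in> {fst i - snd i .. fst i}" using i(2) by (simp add: J1_def)
      ultimately show "y \<in> U" by blast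
    qed
    have J1b[measurable]: "J1 i \<in> sets borel" for i by (simp add: J1_def)
    have step1: "emeasure ?mu (\<Union>i\<in>C1. J1 i) \<le> ennreal r * emeasure lborel U"
    proof -
      have "emeasure ?mu (\<Union>i\<in>C1. J1 i) = (\<integral>\<^sup>+i. emeasure ?mu (J1 i) \<partial>count_space C1)"
        by (rule emeasure_UN_countable[OF _ C1(1) dJ1]) auto
      also have "\<dots> \<le> (\<integral>\<^sup>+i. ennreal r * emeasure lborel (J1 i) \<partial>count_space C1)"
      proof (rule nn_integral_mono)
        fix i assume "i \<in> space (count_space C1)"
        then have i: "i \<in> K1" using C1(2) by auto
        then have t: "0 < snd i" "f (fst i) - f (fst i - snd i) < r * snd i" by (auto simp: K1_def)
        have "emeasure ?mu (J1 i) = ennreal (f (fst i) - f (fst i - snd i))"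
          unfolding J1_def using t by (subst muIoc) auto
        also have "\<dots> \<le> ennreal (r * snd i)" using t by (intro ennreal_leI) auto
        also have "\<dots> = ennreal r * emeasure lborel (J1 i)"
          using t r by (simp add: J1_def ennreal_mult)
        finally show "emeasure ?mu (J1 i) \<le> ennreal r * emeasure lborel (J1 i)" .
      qed
      also have "\<dots> = ennreal r * (\<integral>\<^sup>+i. emeasure lborel (J1 i) \<partial>count_space C1)"
        by (rule nn_integral_cmult) simp
      also have "(\<integral>\<^sup>+i. emeasure lborel (J1 i) \<partial>count_space C1) = emeasure lborel (\<Union>i\<in>C1. J1 i)"
        by (rule emeasure_UN_countable[OF _ C1(1) dJ1, symmetric]) auto
      also have "emeasure lborel (\<Union>i\<in>C1. J1 i) \<le> emeasure lborel U"
        using J1U by (intro emeasure_mono) auto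
      finally show ?thesis by (simp add: mult_left_mono)
    qed
    define E2 where "E2 = E \<inter> (\<Union>i\<in>C1. ball (a1 i) (r1 i))"
    define K2 where "K2 = {j. fst j \<in> E2 \<and> 0 < snd j \<and> (\<exists>i\<in>C1. {fst j .. fst j + snd j} \<subseteq> ball (a1 i) (r1 i))
                        \<and> R * snd j < f (fst j + snd j) - f (fst j)}"
    define a2 where "a2 j = fst j + snd j / 2" for j :: "real \<times> real"
    define r2 where "r2 j = snd j / 2" for j :: "real \<times> real"
    have cb2: "cball (a2 j) (r2 j) = {fst j .. fst j + snd j}" for j
      by (simp add: cball_eq_atLeastAtMost a2_def r2_def)
    obtain C2 where C2: "countable C2" "C2 \<subseteq> K2"
      "pairwise (\<lambda>i j. disjnt (cball (a2 i) (r2 i)) (cball (a2 j) (r2 j))) C2"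
      "negligible (E2 - (\<Union>j\<in>C2. cball (a2 j) (r2 j)))"
    proof (rule Vitali_covering_theorem_cballs[of K2 r2 E2 a2])
      show "\<And>i. i \<in> K2 \<Longrightarrow> 0 < r2 i" by (auto simp: K2_def r2_def)
      fix y d :: real assume y: "y \<in> E2" and d: "0 < d"
      then obtain i where i: "i \<in> C1" "y \<in> ball (a1 i) (r1 i)" unfolding E2_def by blast
      obtain e0 where e0: "e0 > 0" "ball y e0 \<subseteq> ball (a1 i) (r1 i)"
        using i(2) open_contains_ball[of "ball (a1 i) (r1 i)"] by blast
      have md: "min e0 d > 0" using e0 d by simp
      have "\<forall>e>0. \<exists>t. 0 < t \<and> t < e \<and> R * t < f (y + t) - f y" using y unfolding E2_def E_def Eset_def by blast
      then obtain t where t: "0 < t" "t < min e0 d" "R * t < f (y + t) - f y"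
        using md by blast
      have "{y .. y + t} \<subseteq> ball (a1 i) (r1 i)" using e0(2) t by (auto simp: dist_real_def subset_eq)
      then show "\<exists>j. j \<in> K2 \<and> y \<in> cball (a2 j) (r2 j) \<and> r2 j < d"
        using t y i(1) by (intro exI[of _ "(y, t)"]) (auto simp: K2_def r2_def a2_def dist_real_def)
    qed blast
    define J2 where "J2 j = {fst j <.. fst j + snd j}" for j :: "real \<times> real"
    have J2c: "J2 j \<subseteq> cball (a2 j) (r2 j)" for j by (auto simp: J2_def cb2)
    have dJ2: "disjoint_family_on J2 C2"
    proof (unfold disjoint_family_on_def, intro ballI impI)
      fix i j assume ij: "i \<in> C2" "j \<in> C2" "i \<noteq> j"
      then have "disjnt (cball (a2 i) (r2 i)) (cball (a2 j) (r2 j))" using C2(3) unfolding pairwise_def by blast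
      then show "J2 i \<inter> J2 j = {}" using J2c[of i] J2c[of j] unfolding disjnt_def by blast
    qed
    have J2J1: "(\<Union>j\<in>C2. J2 j) \<subseteq> (\<Union>i\<in>C1. J1 i)"
    proof
      fix y assume "y \<in> (\<Union>j\<in>C2. J2 j)"
      then obtain j where j: "j \<in> C2" "y \<in> J2 j" by blast
      then obtain i where i: "i \<in> C1" "{fst j .. fst j + snd j} \<subseteq> ball (a1 i) (r1 i)"
        using C2(2) by (auto simp: K2_def)
      have "y \<in> {fst j .. fst j + snd j}" using j(2) by (simp add: J2_def)
      then have "y \<in> J1 i" using i(2) bl1[of i] J1_def by auto
      then show "y \<in> (\<Union>i\<in>C1. J1 i)" using i(1) by blast
    qed
    have J2b[measurable]: "J2 j \<in> sets borel" for j by (simp add: J2_def)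
    have step2: "ennreal R * emeasure lborel (\<Union>j\<in>C2. J2 j) \<le> emeasure ?mu (\<Union>j\<in>C2. J2 j)"
    proof -
      have "ennreal R * emeasure lborel (\<Union>j\<in>C2. J2 j) = ennreal R * (\<integral>\<^sup>+j. emeasure lborel (J2 j) \<partial>count_space C2)"
        by (subst emeasure_UN_countable[OF _ C2(1) dJ2]) auto
      also have "\<dots> = (\<integral>\<^sup>+j. ennreal R * emeasure lborel (J2 j) \<partial>count_space C2)"
        by (rule nn_integral_cmult[symmetric]) simp
      also have "\<dots> \<le> (\<integral>\<^sup>+j. emeasure ?mu (J2 j) \<partial>count_space C2)"
      proof (rule nn_integral_mono)
        fix j assume "j \<in> space (count_space C2)"
        then have j: "j \<in> K2" using C2(2) by auto
        then have t: "0 < snd j" "R * snd j < f (fst j + snd j) - f (fst j)" by (auto simp: K2_def)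
        have "ennreal R * emeasure lborel (J2 j) = ennreal (R * snd j)"
          using t r by (simp add: J2_def ennreal_mult)
        also have "\<dots> \<le> ennreal (f (fst j + snd j) - f (fst j))" using t by (intro ennreal_leI) auto
        also have "\<dots> = emeasure ?mu (J2 j)"
          unfolding J2_def using t by (subst muIoc) auto
        finally show "ennreal R * emeasure lborel (J2 j) \<le> emeasure ?mu (J2 j)" .
      qed
      also have "\<dots> = emeasure ?mu (\<Union>j\<in>C2. J2 j)"
        by (rule emeasure_UN_countable[OF _ C2(1) dJ2, symmetric]) auto
      finally show ?thesis .
    qed
    have mumono: "emeasure ?mu (\<Union>j\<in>C2. J2 j) \<le> emeasure ?mu (\<Union>i\<in>C1. J1 i)"
      by (rule emeasure_mono[OF J2J1]) (use sets.countable_UN''[OF C1(1), of J1 borel] J1b in simp)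
    define Zc where "Zc = (\<Union>i\<in>C1. {fst i - snd i, fst i}) \<union> fst ` C2"
    have Zcc: "countable Zc" unfolding Zc_def using C1(1) C2(1) by auto
    obtain Z1 where Z1: "Z1 \<in> null_sets lborel" "E - (\<Union>i\<in>C1. cball (a1 i) (r1 i)) \<subseteq> Z1"
      using null_of_negligible[OF C1(4)] by blast
    obtain Z2 where Z2: "Z2 \<in> null_sets lborel" "E2 - (\<Union>j\<in>C2. cball (a2 j) (r2 j)) \<subseteq> Z2"
      using null_of_negligible[OF C2(4)] by blast
    have Zn: "Z1 \<union> Z2 \<union> Zc \<in> null_sets lborel"
      using Z1(1) Z2(1) countable_imp_null_set_lborel[OF Zcc] by auto
    have Ecov: "E \<subseteq> (Z1 \<union> Z2 \<union> Zc) \<union> (\<Union>j\<in>C2. J2 j)"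
    proof
      fix x assume x: "x \<in> E"
      show "x \<in> (Z1 \<union> Z2 \<union> Zc) \<union> (\<Union>j\<in>C2. J2 j)"
      proof (cases "x \<in> (\<Union>i\<in>C1. cball (a1 i) (r1 i))")
        case False then show ?thesis using x Z1(2) by blast
      next
        case True
        then obtain i where i: "i \<in> C1" "x \<in> cball (a1 i) (r1 i)" by blast
        show ?thesis
        proof (cases "x \<in> ball (a1 i) (r1 i)")
          case False
          then have "x \<in> {fst i - snd i, fst i}" using i(2) cb1[of i] bl1[of i] by auto
          then show ?thesis using i(1) unfolding Zc_def by blast
        next
          case True
          then have x2: "x \<in> E2" using x i(1) unfolding E2_def by blast
          show ?thesis
          proof (cases "x \<in> (\<Union>j\<in>C2. cball (a2 j) (r2 j))")
            case False then show ?thesis using x2 Z2(2) by blast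
          next
            case True
            then obtain j where j: "j \<in> C2" "x \<in> cball (a2 j) (r2 j)" by blast
            show ?thesis
            proof (cases "x = fst j")
              case True then show ?thesis using j(1) unfolding Zc_def by blast
            next
              case False
              then have "x \<in> J2 j" using j(2) cb2[of j] by (auto simp: J2_def)
              then show ?thesis using j(1) by blast
            qed
          qed
        qed
      qed
    qed
    have lamE: "emeasure lborel E \<le> emeasure lborel (\<Union>j\<in>C2. J2 j)"
    proof -
      have U2b: "(\<Union>j\<in>C2. J2 j) \<in> sets borel" using sets.countable_UN''[OF C2(1), of J2 borel] J2b by simp
      have Znb: "Z1 \<union> Z2 \<union> Zc \<in> sets borel" using Zn by auto
      have "emeasure lborel E \<le> emeasure lborel ((Z1 \<union> Z2 \<union> Zc) \<union> (\<Union>j\<in>C2. J2 j))"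
        using Ecov U2b Znb by (intro emeasure_mono) auto
      also have "\<dots> \<le> emeasure lborel (Z1 \<union> Z2 \<union> Zc) + emeasure lborel (\<Union>j\<in>C2. J2 j)"
        using U2b Znb by (intro emeasure_subadditive) auto
      also have "\<dots> = emeasure lborel (\<Union>j\<in>C2. J2 j)" using Zn by (simp add: null_setsD1)
      finally show ?thesis .
    qed
    have "ennreal R * ennreal m \<le> ennreal r * ennreal (m + e)"
    proof -
      have "ennreal R * ennreal m \<le> ennreal R * emeasure lborel (\<Union>j\<in>C2. J2 j)"
        using lamE Em by (simp add: mult_left_mono)
      also have "\<dots> \<le> ennreal r * emeasure lborel U" using step2 mumono step1 by order
      also have "\<dots> \<le> ennreal r * ennreal (m + e)" using lamU by (simp add: mult_left_mono)
      finally show ?thesis .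
    qed
    also have "ennreal r * ennreal (m + e) = ennreal (r * (m + e))" using r m0 e by (simp add: ennreal_mult)
    finally have "ennreal (R * m) \<le> ennreal (r * (m + e))" using r m0 by (simp add: ennreal_mult)
    then show ?thesis using r m0 e by (simp add: ennreal_le_iff)
  qed
  have "R * m \<le> r * m"
  proof (rule field_le_epsilon)
    fix e :: real assume e: "e > 0"
    have "R * m \<le> r * (m + e / r)" using key[of "e / r"] e r by simp
    moreover have "r * (m + e / r) = r * m + e" using r by (simp add: field_simps)
    ultimately show "R * m \<le> r * m + e" by simp
  qed
  moreover have "m > 0 \<Longrightarrow> r * m < R * m" using r by (intro mult_strict_right_mono) auto
  ultimately have "m = 0" using m0 by linarith
  then show ?thesis using Em E_def by simp
qed

lemma Eset_negligible:
  assumes "mono f" "continuous_on UNIV f" "0 < r" "r < R"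
  shows "negligible (Eset f r R a b)"
proof -
  have "Eset f r R a b \<in> null_sets lborel"
    using Eset_null[OF assms] Eset_borel[OF assms(2)] by (simp add: null_sets_def)
  then show ?thesis unfolding negligible_iff_null_sets by (rule null_sets_completionI)
qed

lemma right_limsup_witness:
  fixes Q :: "real \<Rightarrow> real"
  assumes "ereal R < Limsup (at_right 0) (\<lambda>t. ereal (Q t))"
  shows "\<forall>e>0. \<exists>t. 0 < t \<and> t < e \<and> R < Q t"
proof (rule ccontr)
  assume "\<not> ?thesis"
  then obtain e where e: "e > 0" "\<forall>t. 0 < t \<and> t < e \<longrightarrow> Q t \<le> R" by (meson not_less)
  have "eventually (\<lambda>t. ereal (Q t) \<le> ereal R) (at_right 0)"
    unfolding eventually_at_right_field using e by auto
  then have "Limsup (at_right 0) (\<lambda>t. ereal (Q t)) \<le> ereal R" by (rule Limsup_bounded)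
  then show False using assms by simp
qed

lemma right_liminf_witness:
  fixes Q :: "real \<Rightarrow> real"
  assumes "Liminf (at_right 0) (\<lambda>t. ereal (Q t)) < ereal r"
  shows "\<forall>e>0. \<exists>t. 0 < t \<and> t < e \<and> Q t < r"
proof (rule ccontr)
  assume "\<not> ?thesis"
  then obtain e where e: "e > 0" "\<forall>t. 0 < t \<and> t < e \<longrightarrow> r \<le> Q t" by (meson not_less)
  have "eventually (\<lambda>t. ereal r \<le> ereal (Q t)) (at_right 0)"
    unfolding eventually_at_right_field using e by auto
  then have "ereal r \<le> Liminf (at_right 0) (\<lambda>t. ereal (Q t))" by (rule Liminf_bounded)
  then show False using assms by simp
qed

lemma left_limsup_witness:
  fixes Q :: "real \<Rightarrow> real"
  assumes "ereal R < Limsup (at_left 0) (\<lambda>t. ereal (Q t))"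
  shows "\<forall>e>0. \<exists>t. 0 < t \<and> t < e \<and> R < Q (- t)"
proof (rule ccontr)
  assume "\<not> ?thesis"
  then obtain e where e: "e > 0" "\<forall>t. 0 < t \<and> t < e \<longrightarrow> Q (- t) \<le> R" by (meson not_less)
  have "eventually (\<lambda>t. ereal (Q t) \<le> ereal R) (at_left 0)"
    unfolding eventually_at_left_field
  proof (intro exI[of _ "-e"] conjI allI impI)
    fix y :: real assume "- e < y" "y < 0"
    then show "ereal (Q y) \<le> ereal R" using e(2)[rule_format, of "- y"] by simp
  qed (use e in simp)
  then have "Limsup (at_left 0) (\<lambda>t. ereal (Q t)) \<le> ereal R" by (rule Limsup_bounded)
  then show False using assms by simp
qed

lemma left_liminf_witness:
  fixes Q :: "real \<Rightarrow> real"
  assumes "Liminf (at_left 0) (\<lambda>t. ereal (Q t)) < ereal r"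
  shows "\<forall>e>0. \<exists>t. 0 < t \<and> t < e \<and> Q (- t) < r"
proof (rule ccontr)
  assume "\<not> ?thesis"
  then obtain e where e: "e > 0" "\<forall>t. 0 < t \<and> t < e \<longrightarrow> r \<le> Q (- t)" by (meson not_less)
  have "eventually (\<lambda>t. ereal r \<le> ereal (Q t)) (at_left 0)"
    unfolding eventually_at_left_field
  proof (intro exI[of _ "-e"] conjI allI impI)
    fix y :: real assume "- e < y" "y < 0"
    then show "ereal r \<le> ereal (Q y)" using e(2)[rule_format, of "- y"] by simp
  qed (use e in simp)
  then have "ereal r \<le> Liminf (at_left 0) (\<lambda>t. ereal (Q t))" by (rule Liminf_bounded)
  then show False using assms by simp
qed

lemma neg_image_negligible:
  fixes S :: "real set" assumes "negligible S" shows "negligible (uminus ` S)"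
proof (rule negligible_locally_Lipschitz_image[OF _ assms])
  fix x assume "x \<in> S"
  show "\<exists>T B. open T \<and> x \<in> T \<and> (\<forall>y \<in> S \<inter> T. norm ((- y) - (- x)) \<le> B * norm (y - x))"
    by (intro exI[of _ UNIV] exI[of _ 1]) (auto simp: norm_minus_commute)
qed simp

lemma mono_lip_diff_ae:
  fixes f :: "real \<Rightarrow> real"
  assumes mono: "mono f" and lip: "\<And>x y. \<bar>f x - f y\<bar> \<le> K * \<bar>x - y\<bar>"
  shows "negligible {x. \<not> f differentiable (at x)}"
proof -
  have K: "K \<ge> 0" using lip[of 1 0] by simp
  have "K-lipschitz_on UNIV f" unfolding lipschitz_on_def using K lip by (simp add: dist_real_def)
  then have cont: "continuous_on UNIV f" by (rule lipschitz_on_continuous_on)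
  define g where "g x = - f (- x)" for x
  have gmono: "mono g" using mono unfolding g_def mono_def by simp
  have gcont: "continuous_on UNIV g" unfolding g_def
    by (intro continuous_intros continuous_on_compose2[OF cont]) auto
  define I where "I = {(n::nat, q1::rat, q2::rat). 0 < q1 \<and> q1 < q2}"
  define F where "F i = (case i of (n, q1, q2) \<Rightarrow>
      Eset f (of_rat q1) (of_rat q2) (- real n) (real n) \<union> uminus ` Eset g (of_rat q1) (of_rat q2) (- real n) (real n))" for i
  define Bad where "Bad = \<Union>(F ` I)"
  have negBad: "negligible Bad" unfolding Bad_def
  proof (rule negligible_countable_Union)
    show "countable (F ` I)" by simp
    fix S assume "S \<in> F ` I"
    then obtain n q1 q2 where S: "S = F (n, q1, q2)" and q: "0 < q1" "q1 < q2" by (auto simp: I_def)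
    have r: "0 < (of_rat q1 :: real)" "(of_rat q1 :: real) < of_rat q2" using q by (auto simp: of_rat_less)
    show "negligible S" unfolding S F_def
      using Eset_negligible[OF mono cont r] neg_image_negligible[OF Eset_negligible[OF gmono gcont r]]
      by simp
  qed
  have "{x. \<not> f differentiable (at x)} \<subseteq> Bad"
  proof (rule subsetI, rule ccontr)
    fix x assume x: "x \<in> {x. \<not> f differentiable (at x)}" and nb: "x \<notin> Bad"
    define Q where "Q t = (f (x + t) - f x) / t" for t
    have Qb: "0 \<le> Q t \<and> Q t \<le> K" for t
    proof (cases "t = 0")
      case False
      have "0 \<le> (f (x + t) - f x) / t"
        using mono False by (cases "t > 0") (auto simp: monoD divide_nonneg_pos divide_nonpos_neg)
      moreover have "\<bar>f (x + t) - f x\<bar> / \<bar>t\<bar> \<le> K" using lip[of "x + t" x] False by (simp add: divide_le_eq)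
      then have "\<bar>(f (x + t) - f x) / t\<bar> \<le> K" by (simp add: abs_divide)
      ultimately show ?thesis unfolding Q_def by linarith
    qed (simp add: Q_def K)
    obtain n :: nat where n: "\<bar>x\<bar> < real n" using reals_Archimedean2 by blast
    have inE: "x \<in> Bad" if "0 < q1" "q1 < q2" "x \<in> Eset f (of_rat q1) (of_rat q2) (- real n) (real n)" for q1 q2
      using that unfolding Bad_def F_def I_def by force
    have inE': "x \<in> Bad" if "0 < q1" "q1 < q2" "- x \<in> Eset g (of_rat q1) (of_rat q2) (- real n) (real n)" for q1 q2
    proof -
      have "x \<in> uminus ` Eset g (of_rat q1) (of_rat q2) (- real n) (real n)"
        using that(3) by (metis add.inverse_inverse image_eqI)
      then show ?thesis using that(1,2) unfolding Bad_def F_def I_def by force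
    qed
    define uR where "uR = Limsup (at_right 0) (\<lambda>t. ereal (Q t))"
    define lR where "lR = Liminf (at_right 0) (\<lambda>t. ereal (Q t))"
    define uL where "uL = Limsup (at_left 0) (\<lambda>t. ereal (Q t))"
    define lL where "lL = Liminf (at_left 0) (\<lambda>t. ereal (Q t))"
    have bnds: "0 \<le> lR" "uR \<le> K" "0 \<le> lL" "uL \<le> K"
      unfolding uR_def lR_def uL_def lL_def using Qb
      by (auto intro!: Liminf_bounded Limsup_bounded always_eventually)
    have ord: "lR \<le> uR" "lL \<le> uL" unfolding uR_def lR_def uL_def lL_def
      by (auto intro!: Liminf_le_Limsup)
    have dense: "\<exists>q1 q2. 0 < q1 \<and> q1 < q2 \<and> a < ereal (of_rat q1) \<and> ereal (of_rat q2) < b"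
      if h: "0 \<le> a" "a < b" "b \<le> K" for a b :: ereal
    proof -
      obtain a' b' where ab: "a = ereal a'" "b = ereal b'" using h K
        by (cases a; cases b) auto
      have "a' < b'" "0 \<le> a'" using h ab by auto
      have m1: "a' < (a' + b') / 2" "(a' + b') / 2 < b'" using \<open>a' < b'\<close> by auto
      obtain r1 where r1: "r1 \<in> \<rat>" "a' < r1" "r1 < (a' + b') / 2" using Rats_dense_in_real[OF m1(1)] by blast
      have "r1 < b'" using r1(3) m1(2) by linarith
      then obtain r2 where r2: "r2 \<in> \<rat>" "r1 < r2" "r2 < b'" using Rats_dense_in_real by blast
      obtain q1 where q1: "r1 = of_rat q1" using r1(1) Rats_cases by blast
      obtain q2 where q2: "r2 = of_rat q2" using r2(1) Rats_cases by blast
      have "(0::real) < of_rat q1" using r1(2) q1 \<open>0 \<le> a'\<close> by linarith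
      then have "0 < q1" by (simp add: zero_less_of_rat_iff)
      moreover have "q1 < q2" using r2 q1 q2 by (simp add: of_rat_less)
      ultimately show ?thesis using r1 r2 q1 q2 ab by (intro exI[of _ q1] exI[of _ q2]) auto
    qed
    have a: "uR \<le> lL"
    proof (rule ccontr)
      assume "\<not> uR \<le> lL"
      then have lt: "lL < uR" by (simp add: not_le)
      obtain q1 q2 where q: "0 < q1" "q1 < q2" "lL < ereal (of_rat q1)" "ereal (of_rat q2) < uR"
        using dense[OF bnds(3) lt bnds(2)] by blast
      have w1: "\<forall>e>0. \<exists>t. 0 < t \<and> t < e \<and> Q (- t) < of_rat q1"
        by (rule left_liminf_witness) (use q(3) lL_def in simp)
      have w2: "\<forall>e>0. \<exists>t. 0 < t \<and> t < e \<and> of_rat q2 < Q t"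
        by (rule right_limsup_witness) (use q(4) uR_def in simp)
      have "x \<in> Eset f (of_rat q1) (of_rat q2) (- real n) (real n)"
        unfolding Eset_def
      proof (intro CollectI conjI allI impI)
        show "x \<in> {- real n<..<real n}" using n by auto
        fix e :: real assume e: "e > 0"
        obtain t where t: "0 < t" "t < e" "Q (- t) < of_rat q1" using w1 e by blast
        have "Q (- t) = (f x - f (x - t)) / t" unfolding Q_def using t(1) by (simp add: field_simps)
        then have "f x - f (x - t) < of_rat q1 * t" using t(1,3) by (simp add: pos_divide_less_eq)
        then show "\<exists>t>0. t < e \<and> f x - f (x - t) < of_rat q1 * t" using t(1,2) by blast
      next
        fix e :: real assume e: "e > 0"
        obtain t where t: "0 < t" "t < e" "of_rat q2 < Q t" using w2 e by blast
        then have "of_rat q2 * t < f (x + t) - f x" using t(1,3) by (simp add: Q_def pos_less_divide_eq)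
        then show "\<exists>t>0. t < e \<and> of_rat q2 * t < f (x + t) - f x" using t(1,2) by blast
      qed
      then show False using inE q nb by blast
    qed
    have b: "uL \<le> lR"
    proof (rule ccontr)
      assume "\<not> uL \<le> lR"
      then have lt: "lR < uL" by (simp add: not_le)
      obtain q1 q2 where q: "0 < q1" "q1 < q2" "lR < ereal (of_rat q1)" "ereal (of_rat q2) < uL"
        using dense[OF bnds(1) lt bnds(4)] by blast
      have w1: "\<forall>e>0. \<exists>t. 0 < t \<and> t < e \<and> Q t < of_rat q1"
        by (rule right_liminf_witness) (use q(3) lR_def in simp)
      have w2: "\<forall>e>0. \<exists>t. 0 < t \<and> t < e \<and> of_rat q2 < Q (- t)"
        by (rule left_limsup_witness) (use q(4) uL_def in simp)
      have "- x \<in> Eset g (of_rat q1) (of_rat q2) (- real n) (real n)"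
        unfolding Eset_def
      proof (intro CollectI conjI allI impI)
        show "- x \<in> {- real n<..<real n}" using n by auto
        fix e :: real assume e: "e > 0"
        obtain t where t: "0 < t" "t < e" "Q t < of_rat q1" using w1 e by blast
        then have "f (x + t) - f x < of_rat q1 * t" using t(1,3) by (simp add: Q_def pos_divide_less_eq)
        moreover have "g (- x) - g (- x - t) = f (x + t) - f x" by (simp add: g_def add.commute)
        ultimately show "\<exists>t>0. t < e \<and> g (- x) - g (- x - t) < of_rat q1 * t" using t(1,2) by auto
      next
        fix e :: real assume e: "e > 0"
        obtain t where t: "0 < t" "t < e" "of_rat q2 < Q (- t)" using w2 e by blast
        have "Q (- t) = (f x - f (x - t)) / t" unfolding Q_def using t(1) by (simp add: field_simps)
        then have "of_rat q2 * t < f x - f (x - t)" using t(1,3) by (simp add: pos_less_divide_eq)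
        moreover have "g (- x + t) - g (- x) = f x - f (x - t)" by (simp add: g_def)
        ultimately show "\<exists>t>0. t < e \<and> of_rat q2 * t < g (- x + t) - g (- x)" using t(1,2) by auto
      qed
      then show False using inE' q nb by blast
    qed
    have eq: "lR = uR" "lL = uL" "uR = lL" using a b ord by auto
    obtain D where D: "uR = ereal D" using bnds eq by (cases uR) auto
    have tR: "((\<lambda>t. ereal (Q t)) \<longlongrightarrow> ereal D) (at_right 0)"
      by (rule Liminf_eq_Limsup) (use D eq lR_def uR_def in auto)
    have tL: "((\<lambda>t. ereal (Q t)) \<longlongrightarrow> ereal D) (at_left 0)"
      by (rule Liminf_eq_Limsup) (use D eq lL_def uL_def in auto)
    have "(Q \<longlongrightarrow> D) (at 0)"
      using tR tL by (intro filterlim_split_at) (simp_all add: lim_ereal)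
    then have "(f has_real_derivative D) (at x)" unfolding DERIV_def Q_def .
    then have "f differentiable (at x)" unfolding real_differentiable_def by blast
    then show False using x by simp
  qed
  then show ?thesis using negBad negligible_subset by blast
qed

lemma lip_diff_ae:
  fixes F :: "real \<Rightarrow> real"
  assumes lip: "\<And>x y. \<bar>F x - F y\<bar> \<le> K * \<bar>x - y\<bar>"
  shows "negligible {x. \<not> F differentiable (at x)}"
proof -
  have K: "K \<ge> 0" using lip[of 1 0] by simp
  define f where "f x = F x + K * x" for x
  have mono: "mono f"
  proof (rule monoI)
    fix x y :: real assume "x \<le> y"
    then show "f x \<le> f y" using lip[of y x] by (simp add: f_def abs_le_iff algebra_simps)
  qed
  have lf: "\<bar>f x - f y\<bar> \<le> (2 * K) * \<bar>x - y\<bar>" for x y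
  proof -
    have "\<bar>f x - f y\<bar> \<le> \<bar>F x - F y\<bar> + \<bar>K * x - K * y\<bar>" unfolding f_def by linarith
    also have "\<bar>K * x - K * y\<bar> = K * \<bar>x - y\<bar>" using K by (simp add: abs_mult right_diff_distrib[symmetric])
    finally show ?thesis using lip[of x y] by linarith
  qed
  have sub: "{x. \<not> F differentiable (at x)} \<subseteq> {x. \<not> f differentiable (at x)}"
  proof (rule subsetI, simp, rule notI)
    fix x assume "\<not> F differentiable (at x)" and "f differentiable (at x)"
    moreover have "(\<lambda>x. f x - K * x) differentiable (at x)"
      using \<open>f differentiable (at x)\<close> by (intro differentiable_diff differentiable_mult) auto
    ultimately show False by (simp add: f_def)
  qed
  show ?thesis by (rule negligible_subset[OF mono_lip_diff_ae[OF mono lf] sub])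
qed

lemma slope_1d:
  fixes F :: "real \<Rightarrow> real"
  assumes lip: "\<And>x y. \<bar>F x - F y\<bar> \<le> K * \<bar>x - y\<bar>" and AB: "A \<le> B"
    and ae: "AE x in lborel. A < x \<and> x < B \<longrightarrow> F differentiable (at x) \<longrightarrow> deriv F x < c"
  shows "F B - F A \<le> c * (B - A)"
proof (rule ccontr)
  assume neg: "\<not> F B - F A \<le> c * (B - A)"
  define h where "h x = F x - c * x" for x
  have hAB: "h A < h B" using neg by (simp add: h_def algebra_simps)
  have K: "K \<ge> 0" using lip[of 1 0] by simp
  have lh: "\<bar>h x - h y\<bar> \<le> (K + \<bar>c\<bar>) * \<bar>x - y\<bar>" for x y
  proof -
    have "\<bar>h x - h y\<bar> \<le> \<bar>F x - F y\<bar> + \<bar>c * x - c * y\<bar>" unfolding h_def by linarith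
    also have "\<bar>c * x - c * y\<bar> = \<bar>c\<bar> * \<bar>x - y\<bar>" by (simp add: abs_mult right_diff_distrib[symmetric])
    finally show ?thesis using lip[of x y] by (simp add: algebra_simps)
  qed
  have "(K + \<bar>c\<bar>)-lipschitz_on UNIV h" unfolding lipschitz_on_def using K lh by (simp add: dist_real_def)
  then have hcont: "continuous_on UNIV h" by (rule lipschitz_on_continuous_on)
  obtain Z where Z: "Z \<in> null_sets lborel" "{x \<in> space lborel. \<not> (A < x \<and> x < B \<longrightarrow> F differentiable (at x) \<longrightarrow> deriv F x < c)} \<subseteq> Z"
    using ae unfolding eventually_ae_filter by blast
  define N0 where "N0 = {x. \<not> F differentiable (at x)} \<union> Z"
  have negN0: "negligible N0" unfolding N0_def
    using lip_diff_ae[OF lip] Z(1) negligible_iff_null_sets null_sets_completionI by blast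
  have sub: "{h A <..< h B} \<subseteq> h ` N0"
  proof
    fix v assume v: "v \<in> {h A <..< h B}"
    define S where "S = {x \<in> {A..B}. v \<le> h x}"
    have Sne: "B \<in> S" using v AB by (auto simp: S_def)
    have Seq: "S = {A..B} \<inter> {x. v \<le> h x}" by (auto simp: S_def)
    have Scl: "closed S" unfolding Seq
      by (rule closed_Int[OF closed_atLeastAtMost closed_Collect_le[OF continuous_on_const hcont]])
    have Sbd: "bdd_below S" by (auto simp: S_def bdd_below_def)
    define x0 where "x0 = Inf S"
    have x0S: "x0 \<in> S" unfolding x0_def using closed_contains_Inf[OF _ Sbd Scl] Sne by blast
    have below: "h y < v" if "A \<le> y" "y < x0" for y
    proof (rule ccontr)
      assume "\<not> h y < v"
      then have "y \<in> S" using that x0S by (auto simp: S_def)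
      then have "x0 \<le> y" unfolding x0_def using Sbd by (rule cInf_lower)
      then show False using that by simp
    qed
    have Ax0: "A < x0"
    proof -
      have "A \<le> x0" "v \<le> h x0" using x0S by (auto simp: S_def)
      moreover have "x0 \<noteq> A" using \<open>v \<le> h x0\<close> v by auto
      ultimately show ?thesis by simp
    qed
    have hx0: "h x0 = v"
    proof -
      have "v \<le> h x0" using x0S by (auto simp: S_def)
      moreover have "\<not> v < h x0"
      proof
        assume "v < h x0"
        obtain y where y: "A \<le> y" "y \<le> x0" "h y = v"
          using IVT'[of h A v x0] v Ax0 \<open>v < h x0\<close> continuous_on_subset[OF hcont] by auto
        have "y \<noteq> x0" using y(3) \<open>v < h x0\<close> by auto
        then show False using below[of y] y by simp
      qed
      ultimately show ?thesis by simp
    qed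
    have x0B: "x0 < B" using x0S hx0 v by (auto simp: S_def order.order_iff_strict)
    have "x0 \<in> N0"
    proof (rule ccontr)
      assume "x0 \<notin> N0"
      then have d: "F differentiable (at x0)" and "x0 \<notin> Z" by (auto simp: N0_def)
      then have dc: "deriv F x0 < c" using Z(2) Ax0 x0B by auto
      have "DERIV F x0 :> deriv F x0" using d by (simp add: DERIV_deriv_iff_real_differentiable)
      then have "DERIV h x0 :> deriv F x0 - c" unfolding h_def
        by (auto intro!: derivative_eq_intros)
      then obtain d where d: "d > 0" "\<forall>t>0. t < d \<longrightarrow> h x0 < h (x0 - t)"
        using DERIV_neg_dec_left dc by force
      define t where "t = min (d / 2) (x0 - A)"
      have t: "t > 0" "t < d" "t \<le> x0 - A" using d Ax0 by (auto simp: t_def)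
      have "h x0 < h (x0 - t)" using d(2) t by auto
      moreover have "h (x0 - t) < v" using below[of "x0 - t"] t by simp
      ultimately show False using hx0 by simp
    qed
    then show "v \<in> h ` N0" using hx0 by blast
  qed
  have "negligible (h ` N0)"
  proof (rule negligible_locally_Lipschitz_image[OF _ negN0])
    fix x assume "x \<in> N0"
    show "\<exists>T B. open T \<and> x \<in> T \<and> (\<forall>y \<in> N0 \<inter> T. norm (h y - h x) \<le> B * norm (y - x))"
      using lh by (intro exI[of _ UNIV] exI[of _ "K + \<bar>c\<bar>"]) auto
  qed simp
  then have "negligible {h A <..< h B}" using sub negligible_subset by blast
  moreover have "\<not> negligible {h A <..< h B}" using hAB by (intro open_not_negligible) auto
  ultimately show False by blast
qed

lemma dist_same_fst: "dist (s, a) (s, b) = \<bar>a - b\<bar>" for s a b :: real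
  by (simp add: dist_Pair_Pair dist_real_def)
lemma dist_same_snd: "dist (s, a) (t, a) = \<bar>s - t\<bar>" for s t a :: real
  by (simp add: dist_Pair_Pair dist_real_def)

lemma gamma_AE:
  assumes "gammaP p < ereal c"
  shows "AE x in lborel. x \<in> {0<..} \<times> {0<..} \<longrightarrow> partialN p x < c"
proof -
  let ?M = "restrict_space lborel ({0<..} \<times> {0<..} :: (real \<times> real) set)"
  have meas: "(\<lambda>x. ereal (partialN p x)) \<in> borel_measurable ?M"
  proof (rule ccontr)
    assume "\<not> ?thesis"
    then have "gammaP p = top" unfolding gammaP_def by (rule esssup_non_measurable)
    then show False using assms by simp
  qed
  have "Limsup (ae_filter ?M) (\<lambda>x. ereal (partialN p x)) < ereal c"
    using assms meas unfolding gammaP_def esssup_def by simp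
  then have "AE x in ?M. ereal (partialN p x) < ereal c" by (rule Limsup_lessD)
  then have "AE x in ?M. partialN p x < c" by simp
  moreover have "({0<..} \<times> {0<..} :: (real \<times> real) set) \<inter> space lborel \<in> sets lborel"
    by (simp add: borel_open open_Times)
  ultimately show ?thesis by (simp add: AE_restrict_space_iff)
qed

lemma slope_from_gamma:
  fixes p :: "real \<Rightarrow> real \<Rightarrow> real"
  assumes lipq: "L-lipschitz_on quadrant (\<lambda>x. p (fst x) (snd x))"
    and g: "gammaP p < ereal c"
    and s: "s > 0" and AB: "0 \<le> A" "A \<le> B"
  shows "p s B - p s A \<le> c * (B - A)"
proof -
  have L: "L \<ge> 0" using lipq by (simp add: lipschitz_on_def)
  have lipAll: "\<bar>p (fst x) (snd x) - p (fst y) (snd y)\<bar> \<le> L * dist x y"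
    if "x \<in> quadrant" "y \<in> quadrant" for x y
    using lipq that unfolding lipschitz_on_def dist_real_def by blast
  have lipN: "\<bar>p s a - p s b\<bar> \<le> L * \<bar>a - b\<bar>" if "s \<ge> 0" "a \<ge> 0" "b \<ge> 0" for s a b
    using lipAll[of "(s, a)" "(s, b)"] that by (simp add: quadrant_def dist_same_fst)
  have lipS: "\<bar>p s a - p t a\<bar> \<le> L * \<bar>s - t\<bar>" if "s \<ge> 0" "t \<ge> 0" "a \<ge> 0" for s t a
    using lipAll[of "(s, a)" "(t, a)"] that by (simp add: quadrant_def dist_same_snd)
  have AE2: "AE x in lborel \<Otimes>\<^sub>M lborel. x \<in> {0<..} \<times> {0<..} \<longrightarrow> partialN p x < c"
    unfolding lborel_prod by (rule gamma_AE[OF g])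
  have ps: "pair_sigma_finite (lborel :: real measure) (lborel :: real measure)"
    by (simp add: pair_sigma_finite_def lborel.sigma_finite_measure_axioms)
  have "AE s in lborel. AE N in lborel. (s, N) \<in> {0<..} \<times> {0<..} \<longrightarrow> partialN p (s, N) < c"
    by (rule pair_sigma_finite.AE_pair[OF ps AE2])
  then obtain Zs where Zs: "Zs \<in> null_sets lborel"
    "{s \<in> space lborel. \<not> (AE N in lborel. (s, N) \<in> {0<..} \<times> {0<..} \<longrightarrow> partialN p (s, N) < c)} \<subseteq> Zs"
    unfolding eventually_ae_filter by blast
  have good: "p s' B - p s' A \<le> c * (B - A)" if s': "s' > 0" "s' \<notin> Zs" for s'
  proof -
    have ae: "AE N in lborel. (s', N) \<in> {0<..} \<times> {0<..} \<longrightarrow> partialN p (s', N) < c"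
    proof (rule ccontr)
      assume "\<not> ?thesis"
      then have "s' \<in> {s \<in> space lborel. \<not> (AE N in lborel. (s, N) \<in> {0<..} \<times> {0<..} \<longrightarrow> partialN p (s, N) < c)}" by simp
      then show False using Zs(2) s'(2) by blast
    qed
    define G where "G y = p s' (max y 0)" for y
    have lipG: "\<bar>G x - G y\<bar> \<le> L * \<bar>x - y\<bar>" for x y
    proof -
      have "\<bar>G x - G y\<bar> \<le> L * \<bar>max x 0 - max y 0\<bar>" unfolding G_def using lipN s' by simp
      also have "\<dots> \<le> L * \<bar>x - y\<bar>" using L by (intro mult_left_mono) auto
      finally show ?thesis .
    qed
    have "AE N in lborel. A < N \<and> N < B \<longrightarrow> G differentiable (at N) \<longrightarrow> deriv G N < c"
      using ae
    proof (rule AE_mp, intro AE_I2 impI)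
      fix N assume h: "(s', N) \<in> {0<..} \<times> {0<..} \<longrightarrow> partialN p (s', N) < c"
        and N: "A < N \<and> N < B" and dG: "G differentiable (at N)"
      have N0: "N > 0" using N AB by simp
      have DG: "DERIV G N :> deriv G N" using dG by (simp add: DERIV_deriv_iff_real_differentiable)
      have Dp: "DERIV (p s') N :> deriv G N"
        by (rule has_field_derivative_transform_within_open[OF DG, of "{0<..}"]) (use N0 in \<open>auto simp: G_def\<close>)
      have "p s' differentiable (at N)" using Dp real_differentiable_def by blast
      then have "partialN p (s', N) = deriv G N" unfolding partialN_def using DERIV_imp_deriv[OF Dp] by simp
      then show "deriv G N < c" using h N0 s' by simp
    qed
    then have "G B - G A \<le> c * (B - A)" by (rule slope_1d[OF lipG AB(2)])
    then show ?thesis using AB by (simp add: G_def)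
  qed
  show ?thesis
  proof (rule field_le_epsilon)
    fix e :: real assume e: "e > 0"
    define d where "d = e / (2 * L + 1)"
    have d: "d > 0" using e L by (simp add: d_def)
    have "\<exists>s'. s' \<in> {s<..<s + d} \<and> s' \<notin> Zs"
    proof (rule ccontr)
      assume "\<not> ?thesis"
      then have "{s<..<s + d} \<subseteq> Zs" by blast
      then have "emeasure lborel {s<..<s + d} \<le> emeasure lborel Zs" using Zs(1) by (intro emeasure_mono) auto
      then show False using Zs(1) d by (simp add: null_setsD1)
    qed
    then obtain s' where s': "s < s'" "s' < s + d" "s' \<notin> Zs" by auto
    have gs: "p s' B - p s' A \<le> c * (B - A)" using good[of s'] s' s by simp
    have "\<bar>p s B - p s' B\<bar> \<le> L * \<bar>s - s'\<bar>" "\<bar>p s A - p s' A\<bar> \<le> L * \<bar>s - s'\<bar>"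
      using lipS[of s s' B] lipS[of s s' A] s s' AB by auto
    moreover have "L * \<bar>s - s'\<bar> \<le> L * d" using s' L by (intro mult_left_mono) auto
    moreover have "2 * (L * d) \<le> e" using e L by (simp add: d_def field_simps)
    ultimately show "p s B - p s A \<le> c * (B - A) + e" using gs by linarith
  qed
qed

lemma sgrid_pos: "ds > 0 \<Longrightarrow> sgrid ds (Suc j) > 0"
  unfolding sgrid_def by (simp add: field_simps add_pos_nonneg)

lemma sgrid_diff: "sgrid ds (Suc j) - sgrid ds j = ds"
  unfolding sgrid_def by (simp add: field_simps)

lemma sums_nonneg_zero:
  fixes f :: "nat \<Rightarrow> real"
  assumes "f sums 0" "\<And>j. f j \<ge> 0" shows "f j = 0"
  using assms by (metis sums_unique summable_def suminf_eq_zero_iff)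

lemma step_basic:
  fixes u v :: "nat \<Rightarrow> real" and p :: "real \<Rightarrow> real \<Rightarrow> real"
  assumes ds: "ds > 0" and dt: "dt > 0" and cfl: "dt * (1/ds + P) \<le> 1"
    and pb: "\<And>s N. s > 0 \<Longrightarrow> N \<ge> 0 \<Longrightarrow> 0 \<le> p s N \<and> p s N \<le> P"
    and u0: "u 0 = N0" and N0: "N0 \<ge> 0" and unn: "\<forall>j\<ge>1. u j \<ge> 0"
    and um: "(\<lambda>j. ds * u (Suc j)) sums M1"
    and uf: "(\<lambda>j. ds * p (sgrid ds (Suc j)) N0 * u (Suc j)) sums N0"
    and sch: "\<forall>j\<ge>1. v j = u j - dt / ds * (u j - u (j - 1)) - dt * p (sgrid ds j) N0 * u j"
  shows "\<forall>j\<ge>1. v j \<ge> 0" and "(\<lambda>j. ds * v (Suc j)) sums M1"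
proof -
  let ?l = "dt / ds"
  have l0: "?l \<ge> 0" using ds dt by simp
  have lP: "?l + dt * P \<le> 1" using cfl by (simp add: field_simps)
  have vS: "v (Suc j) = (1 - ?l - dt * p (sgrid ds (Suc j)) N0) * u (Suc j) + ?l * u j" for j
    using sch[rule_format, of "Suc j"] by (simp add: algebra_simps)
  show "\<forall>j\<ge>1. v j \<ge> 0"
  proof (intro allI impI)
    fix j :: nat assume "j \<ge> 1"
    then obtain k where k: "j = Suc k" by (cases j) auto
    have p: "0 \<le> p (sgrid ds (Suc k)) N0 \<and> p (sgrid ds (Suc k)) N0 \<le> P"
      using pb[OF sgrid_pos[OF ds] N0] .
    have "dt * p (sgrid ds (Suc k)) N0 \<le> dt * P" using p dt by (simp add: mult_left_mono)
    then have a: "1 - ?l - dt * p (sgrid ds (Suc k)) N0 \<ge> 0" using lP by linarith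
    have b: "u (Suc k) \<ge> 0" using unn by simp
    have c: "u k \<ge> 0" using unn u0 N0 by (cases k) auto
    show "v j \<ge> 0" unfolding k vS using a b c l0 by (intro add_nonneg_nonneg mult_nonneg_nonneg) auto
  qed
  have uS0: "(\<lambda>j. u (Suc j)) \<longlonglongrightarrow> 0"
  proof -
    have "(\<lambda>j. ds * u (Suc j)) \<longlonglongrightarrow> 0" using um summable_LIMSEQ_zero sums_summable by blast
    then have "(\<lambda>j. (1/ds) * (ds * u (Suc j))) \<longlonglongrightarrow> (1/ds) * 0" by (intro tendsto_mult) auto
    then show ?thesis using ds by simp
  qed
  then have "u \<longlonglongrightarrow> 0" using LIMSEQ_imp_Suc by blast
  then have tel: "(\<lambda>j. u (Suc j) - u j) sums (0 - N0)" using telescope_sums u0 by metis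
  have "(\<lambda>j. ds * u (Suc j) - dt * (u (Suc j) - u j) - dt * (ds * p (sgrid ds (Suc j)) N0 * u (Suc j)))
        sums (M1 - dt * (0 - N0) - dt * N0)"
    by (intro sums_diff sums_mult um tel uf)
  moreover have "ds * v (Suc j) = ds * u (Suc j) - dt * (u (Suc j) - u j) - dt * (ds * p (sgrid ds (Suc j)) N0 * u (Suc j))" for j
    using sch[rule_format, of "Suc j"] ds by (simp add: field_simps)
  ultimately show "(\<lambda>j. ds * v (Suc j)) sums M1" by simp
qed

lemma step_TV:
  fixes u v :: "nat \<Rightarrow> real" and p :: "real \<Rightarrow> real \<Rightarrow> real"
  assumes ds: "ds > 0" and dt: "dt > 0" and cfl: "dt * (1/ds + P) \<le> 1"
    and P: "P \<ge> 0" and L: "L \<ge> 0" and c: "c \<ge> 0" and cM: "c * M1 < 1"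
    and pb: "\<And>s N. s > 0 \<Longrightarrow> N \<ge> 0 \<Longrightarrow> 0 \<le> p s N \<and> p s N \<le> P"
    and pl: "\<And>s s' N. s > 0 \<Longrightarrow> s' > 0 \<Longrightarrow> N \<ge> 0 \<Longrightarrow> \<bar>p s N - p s' N\<bar> \<le> L * \<bar>s - s'\<bar>"
    and slope: "M1 > 0 \<Longrightarrow> (\<And>s N N'. s > 0 \<Longrightarrow> 0 \<le> N \<Longrightarrow> N \<le> N' \<Longrightarrow> p s N' - p s N \<le> c * (N' - N))"
    and u0: "u 0 = N0" and N0: "N0 \<ge> 0" and unn: "\<forall>j\<ge>1. u j \<ge> 0"
    and um: "(\<lambda>j. ds * u (Suc j)) sums M1"
    and uf: "(\<lambda>j. ds * p (sgrid ds (Suc j)) N0 * u (Suc j)) sums N0"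
    and v0: "v 0 = N1" and N1: "N1 \<ge> 0" and vnn: "\<forall>j\<ge>1. v j \<ge> 0"
    and vm: "(\<lambda>j. ds * v (Suc j)) sums M1"
    and vf: "(\<lambda>j. ds * p (sgrid ds (Suc j)) N1 * v (Suc j)) sums N1"
    and sch: "\<forall>j\<ge>1. v j = u j - dt / ds * (u j - u (j - 1)) - dt * p (sgrid ds j) N0 * u j"
    and utv: "summable (\<lambda>j. \<bar>u (Suc j) - u j\<bar>)"
  shows "summable (\<lambda>j. \<bar>v (Suc j) - v j\<bar>) \<and>
     (\<Sum>j. \<bar>v (Suc j) - v j\<bar>) \<le> (1 + dt * (P / (1 - c*M1))) * (\<Sum>j. \<bar>u (Suc j) - u j\<bar>)
        + dt * ((P*P + L) * M1 + P*P*M1/(1 - c*M1))"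
proof -
  let ?l = "dt / ds"
  define q where "q j = p (sgrid ds j) N0" for j
  define T where "T = (\<Sum>j. \<bar>u (Suc j) - u j\<bar>)"
  define K where "K = 1 - c * M1"
  have K: "K > 0" using cM by (simp add: K_def)
  have l0: "?l \<ge> 0" using ds dt by simp
  have lP: "?l + dt * P \<le> 1" using cfl by (simp add: field_simps)
  have q: "0 \<le> q (Suc j) \<and> q (Suc j) \<le> P" for j
    unfolding q_def using pb[OF sgrid_pos[OF ds] N0] .
  have dq: "dt * q (Suc j) \<le> dt * P" for j using q[of j] dt by (simp add: mult_left_mono)
  have uS: "u (Suc j) \<ge> 0" for j using unn by simp
  have uj: "u j \<ge> 0" for j using unn u0 N0 by (cases j) auto
  have vS: "v (Suc j) = (1 - ?l - dt * q (Suc j)) * u (Suc j) + ?l * u j" for j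
    using sch[rule_format, of "Suc j"] by (simp add: algebra_simps q_def)
  have M1: "M1 \<ge> 0"
  proof -
    have z: "(\<lambda>j. 0::real) sums 0" by simp
    show ?thesis using sums_le[OF _ z um] uS ds by simp
  qed
  have dqL: "\<bar>q (Suc (Suc j)) - q (Suc j)\<bar> \<le> L * ds" for j
    using pl[OF sgrid_pos[OF ds] sgrid_pos[OF ds] N0, of "Suc j" j] sgrid_diff[of ds "Suc j"] ds
    by (simp add: q_def)
  have Dint: "\<bar>v (Suc (Suc j)) - v (Suc j)\<bar> \<le> (1 - ?l) * \<bar>u (Suc (Suc j)) - u (Suc j)\<bar> + ?l * \<bar>u (Suc j) - u j\<bar>
      + dt * L * (ds * u (Suc j))" for j
  proof -
    have e: "v (Suc (Suc j)) - v (Suc j) = (1 - ?l - dt * q (Suc (Suc j))) * (u (Suc (Suc j)) - u (Suc j))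
       + ?l * (u (Suc j) - u j) - dt * (q (Suc (Suc j)) - q (Suc j)) * u (Suc j)"
      unfolding vS by (simp add: algebra_simps)
    have a0: "0 \<le> 1 - ?l - dt * q (Suc (Suc j))" using dq[of "Suc j"] lP by linarith
    have a1: "1 - ?l - dt * q (Suc (Suc j)) \<le> 1 - ?l" using q[of "Suc j"] dt by simp
    have t1: "\<bar>(1 - ?l - dt * q (Suc (Suc j))) * (u (Suc (Suc j)) - u (Suc j))\<bar> \<le> (1 - ?l) * \<bar>u (Suc (Suc j)) - u (Suc j)\<bar>"
      using a0 a1 by (simp add: abs_mult mult_right_mono)
    have t2: "\<bar>?l * (u (Suc j) - u j)\<bar> = ?l * \<bar>u (Suc j) - u j\<bar>" using dt ds by (simp add: abs_mult)
    have t3: "\<bar>dt * (q (Suc (Suc j)) - q (Suc j)) * u (Suc j)\<bar> \<le> dt * L * (ds * u (Suc j))"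
    proof -
      have "\<bar>q (Suc (Suc j)) - q (Suc j)\<bar> * u (Suc j) \<le> (L * ds) * u (Suc j)"
        using dqL[of j] uS[of j] by (rule mult_right_mono)
      then have "dt * (\<bar>q (Suc (Suc j)) - q (Suc j)\<bar> * u (Suc j)) \<le> dt * ((L * ds) * u (Suc j))"
        using dt by (intro mult_left_mono) auto
      then show ?thesis using dt uS[of j] by (simp add: abs_mult mult.assoc)
    qed
    show ?thesis unfolding e
      apply (rule order_trans[OF abs_triangle_ineq4])
      apply (rule order_trans[OF add_mono[OF abs_triangle_ineq order_refl]])
      using t1 t2 t3 by linarith
  qed
  have sU: "summable (\<lambda>j. \<bar>u (Suc (Suc j)) - u (Suc j)\<bar>)"
    using utv summable_Suc_iff[of "\<lambda>j. \<bar>u (Suc j) - u j\<bar>"] by simp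
  have sumU: "(\<Sum>j. \<bar>u (Suc (Suc j)) - u (Suc j)\<bar>) = T - \<bar>u 1 - u 0\<bar>"
    unfolding T_def using suminf_split_head[OF utv] by simp
  define g where "g j = (1 - ?l) * \<bar>u (Suc (Suc j)) - u (Suc j)\<bar> + ?l * \<bar>u (Suc j) - u j\<bar> + dt * L * (ds * u (Suc j))" for j
  have gs: "g sums ((1 - ?l) * (T - \<bar>u 1 - u 0\<bar>) + ?l * T + dt * L * M1)"
  proof -
    have a: "(\<lambda>j. \<bar>u (Suc (Suc j)) - u (Suc j)\<bar>) sums (T - \<bar>u 1 - u 0\<bar>)"
      using summable_sums[OF sU] sumU by simp
    have b: "(\<lambda>j. \<bar>u (Suc j) - u j\<bar>) sums T" unfolding T_def by (rule summable_sums[OF utv])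
    show ?thesis unfolding g_def
      by (intro sums_add sums_mult a b um)
  qed
  have Dg: "\<bar>v (Suc (Suc j)) - v (Suc j)\<bar> \<le> g j" for j using Dint[of j] by (simp add: g_def)
  have sVi: "summable (\<lambda>j. \<bar>v (Suc (Suc j)) - v (Suc j)\<bar>)"
  proof (rule summable_comparison_test'[OF sums_summable[OF gs], of 0])
    fix j :: nat show "norm \<bar>v (Suc (Suc j)) - v (Suc j)\<bar> \<le> g j" unfolding real_norm_def abs_abs by (rule Dg)
  qed
  have sumVi: "(\<Sum>j. \<bar>v (Suc (Suc j)) - v (Suc j)\<bar>) \<le> (1 - ?l) * (T - \<bar>u 1 - u 0\<bar>) + ?l * T + dt * L * M1"
  proof -
    have "(\<Sum>j. \<bar>v (Suc (Suc j)) - v (Suc j)\<bar>) \<le> suminf g"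
      by (rule suminf_le[OF Dg sVi sums_summable[OF gs]])
    also have "suminf g = (1 - ?l) * (T - \<bar>u 1 - u 0\<bar>) + ?l * T + dt * L * M1" by (rule sums_unique[OF gs, symmetric])
    finally show ?thesis .
  qed
  have sV: "summable (\<lambda>j. \<bar>v (Suc j) - v j\<bar>)"
    using sVi summable_Suc_iff[of "\<lambda>j. \<bar>v (Suc j) - v j\<bar>"] by simp
  have N0P: "N0 \<le> P * M1"
  proof -
    have le: "ds * q (Suc j) * u (Suc j) \<le> P * (ds * u (Suc j))" for j
    proof -
      have "q (Suc j) * (ds * u (Suc j)) \<le> P * (ds * u (Suc j))"
        using q[of j] uS[of j] ds by (intro mult_right_mono) auto
      then show ?thesis by (simp add: algebra_simps)
    qed
    have PM: "(\<lambda>j. P * (ds * u (Suc j))) sums (P * M1)" by (intro sums_mult um)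
    show ?thesis by (rule sums_le[OF le uf[folded q_def] PM])
  qed
  have Db: "\<bar>v 1 - v 0\<bar> \<le> (1 - ?l) * \<bar>u 1 - u 0\<bar> + \<bar>N1 - N0\<bar> + dt * P * (P * M1)"
  proof -
    have e: "v 1 - v 0 = (1 - ?l - dt * q 1) * (u 1 - u 0) + (N0 - N1) - dt * q 1 * N0"
      using vS[of 0] u0 v0 by (simp add: algebra_simps)
    have a0: "0 \<le> 1 - ?l - dt * q 1" using dq[of 0] lP by simp
    have a1: "1 - ?l - dt * q 1 \<le> 1 - ?l" using q[of 0] dt by simp
    have t1: "\<bar>(1 - ?l - dt * q 1) * (u 1 - u 0)\<bar> \<le> (1 - ?l) * \<bar>u 1 - u 0\<bar>"
      using a0 a1 by (simp add: abs_mult mult_right_mono)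
    have t3: "\<bar>dt * q 1 * N0\<bar> \<le> dt * P * (P * M1)"
    proof -
      have "\<bar>dt * q 1 * N0\<bar> = dt * q 1 * N0" using q[of 0] dt N0 by simp
      also have "\<dots> \<le> dt * P * N0" using dq[of 0] N0 by (simp add: mult_right_mono)
      also have "\<dots> \<le> dt * P * (P * M1)" using N0P dt P by (simp add: mult_left_mono)
      finally show ?thesis .
    qed
    show ?thesis unfolding e
      apply (rule order_trans[OF abs_triangle_ineq4])
      apply (rule order_trans[OF add_mono[OF abs_triangle_ineq order_refl]])
      using t1 t3 abs_minus_commute[of N0 N1] by linarith
  qed
  have TV: "(\<Sum>j. \<bar>v (Suc j) - v j\<bar>) \<le> T + \<bar>N1 - N0\<bar> + dt * (P * P + L) * M1"
  proof -
    have "(\<Sum>j. \<bar>v (Suc j) - v j\<bar>) = (\<Sum>j. \<bar>v (Suc (Suc j)) - v (Suc j)\<bar>) + \<bar>v 1 - v 0\<bar>"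
      using suminf_split_head[OF sV] by simp
    also have "\<dots> \<le> (1 - ?l) * (T - \<bar>u 1 - u 0\<bar>) + ?l * T + dt * L * M1 + ((1 - ?l) * \<bar>u 1 - u 0\<bar> + \<bar>N1 - N0\<bar> + dt * P * (P * M1))"
      using sumVi Db by linarith
    also have "\<dots> = T + \<bar>N1 - N0\<bar> + dt * (P * P + L) * M1" by (simp add: algebra_simps)
    finally show ?thesis .
  qed
  define B where "B j = ds * q (Suc j) * v (Suc j)" for j
  define A where "A j = ds * (p (sgrid ds (Suc j)) N1 - q (Suc j)) * v (Suc j)" for j
  define S where "S j = ds * q (Suc j) * (v (Suc j) - u (Suc j))" for j
  have vS0: "v (Suc j) \<ge> 0" for j using vnn by simp
  have sB: "summable B"
  proof (rule summable_comparison_test[of _ "\<lambda>j. P * (ds * v (Suc j))"])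
    show "\<exists>N. \<forall>n\<ge>N. norm (B n) \<le> P * (ds * v (Suc n))"
    proof (intro exI allI impI)
      fix n :: nat
      have "q (Suc n) * (ds * v (Suc n)) \<le> P * (ds * v (Suc n))"
        using q[of n] vS0[of n] ds by (intro mult_right_mono) auto
      moreover have "norm (B n) = q (Suc n) * (ds * v (Suc n))"
        using q[of n] vS0[of n] ds by (simp add: B_def abs_mult algebra_simps)
      ultimately show "norm (B n) \<le> P * (ds * v (Suc n))" by simp
    qed
    show "summable (\<lambda>j. P * (ds * v (Suc j)))" by (rule sums_summable[OF sums_mult[OF vm]])
  qed
  have sA: "A sums (N1 - suminf B)"
  proof -
    have "(\<lambda>j. ds * p (sgrid ds (Suc j)) N1 * v (Suc j) - B j) sums (N1 - suminf B)"
      using sums_diff[OF vf summable_sums[OF sB]] .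
    moreover have "ds * p (sgrid ds (Suc j)) N1 * v (Suc j) - B j = A j" for j
      by (simp add: A_def B_def algebra_simps)
    ultimately show ?thesis by simp
  qed
  have sS: "S sums (suminf B - N0)"
  proof -
    have "(\<lambda>j. B j - ds * q (Suc j) * u (Suc j)) sums (suminf B - N0)"
      using sums_diff[OF summable_sums[OF sB] uf[folded q_def]] .
    moreover have "B j - ds * q (Suc j) * u (Suc j) = S j" for j
      by (simp add: S_def B_def algebra_simps)
    ultimately show ?thesis by simp
  qed
  have NS: "N1 - N0 = suminf A + suminf S" using sums_unique[OF sA] sums_unique[OF sS] by simp
  have Sb: "\<bar>S j\<bar> \<le> dt * P * \<bar>u (Suc j) - u j\<bar> + dt * P * P * (ds * u (Suc j))" for j
  proof -
    have e: "S j = - (dt * q (Suc j) * (u (Suc j) - u j)) - dt * q (Suc j) * q (Suc j) * (ds * u (Suc j))"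
      unfolding S_def vS using ds by (simp add: field_simps)
    have t1: "\<bar>dt * q (Suc j) * (u (Suc j) - u j)\<bar> \<le> dt * P * \<bar>u (Suc j) - u j\<bar>"
      using dq[of j] q[of j] dt by (simp add: abs_mult mult_right_mono)
    have "q (Suc j) * q (Suc j) \<le> P * P" using q[of j] by (simp add: mult_mono)
    then have "(q (Suc j) * q (Suc j)) * (dt * (ds * u (Suc j))) \<le> (P * P) * (dt * (ds * u (Suc j)))"
      using dt ds uS[of j] by (intro mult_right_mono) auto
    then have t2: "\<bar>dt * q (Suc j) * q (Suc j) * (ds * u (Suc j))\<bar> \<le> dt * P * P * (ds * u (Suc j))"
      using q[of j] dt ds uS[of j] by (simp add: abs_mult algebra_simps)
    show ?thesis unfolding e
      apply (rule order_trans[OF abs_triangle_ineq4])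
      using t1 t2 by simp
  qed
  have Sbs: "(\<lambda>j. dt * P * \<bar>u (Suc j) - u j\<bar> + dt * P * P * (ds * u (Suc j))) sums (dt * P * T + dt * P * P * M1)"
    unfolding T_def by (intro sums_add sums_mult um summable_sums utv)
  have absS: "\<bar>suminf S\<bar> \<le> dt * P * T + dt * P * P * M1"
  proof -
    have "summable (\<lambda>j. \<bar>S j\<bar>)" using Sb Sbs by (intro summable_comparison_test[OF _ sums_summable[OF Sbs]]) auto
    then have "\<bar>suminf S\<bar> \<le> (\<Sum>j. \<bar>S j\<bar>)" by (rule summable_rabs)
    also have "\<dots> \<le> dt * P * T + dt * P * P * M1"
      using suminf_le[OF Sb \<open>summable (\<lambda>j. \<bar>S j\<bar>)\<close> sums_summable[OF Sbs]] sums_unique[OF Sbs] by simp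
    finally show ?thesis .
  qed
  have vzero: "M1 = 0 \<Longrightarrow> v (Suc j) = 0" for j
    using sums_nonneg_zero[of "\<lambda>j. ds * v (Suc j)" j] vm vS0 ds by simp
  have Aup: "A j \<le> c * (N1 - N0) * (ds * v (Suc j))" if "N0 \<le> N1" for j
  proof (cases "M1 > 0")
    case True
    have "p (sgrid ds (Suc j)) N1 - q (Suc j) \<le> c * (N1 - N0)"
      using slope[OF True sgrid_pos[OF ds] N0 that] by (simp add: q_def)
    then have "(p (sgrid ds (Suc j)) N1 - q (Suc j)) * (ds * v (Suc j)) \<le> c * (N1 - N0) * (ds * v (Suc j))"
      using vS0[of j] ds by (intro mult_right_mono) auto
    then show ?thesis unfolding A_def by (simp add: algebra_simps)
  next
    case False then have "M1 = 0" using M1 by simp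
    then show ?thesis using vzero by (simp add: A_def)
  qed
  have Alow: "A j \<ge> - c * (N0 - N1) * (ds * v (Suc j))" if "N1 \<le> N0" for j
  proof (cases "M1 > 0")
    case True
    have "q (Suc j) - p (sgrid ds (Suc j)) N1 \<le> c * (N0 - N1)"
      using slope[OF True sgrid_pos[OF ds] N1 that] by (simp add: q_def)
    then have "(q (Suc j) - p (sgrid ds (Suc j)) N1) * (ds * v (Suc j)) \<le> c * (N0 - N1) * (ds * v (Suc j))"
      using vS0[of j] ds by (intro mult_right_mono) auto
    then show ?thesis unfolding A_def by (simp add: algebra_simps)
  next
    case False then have "M1 = 0" using M1 by simp
    then show ?thesis using vzero by (simp add: A_def)
  qed
  have Nd: "K * \<bar>N1 - N0\<bar> \<le> \<bar>suminf S\<bar>"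
  proof (cases "N0 \<le> N1")
    case True
    have "(\<lambda>j. c * (N1 - N0) * (ds * v (Suc j))) sums (c * (N1 - N0) * M1)" by (intro sums_mult vm)
    then have "suminf A \<le> c * (N1 - N0) * M1" using sums_le[OF Aup[OF True] sA] sums_unique[OF sA] by simp
    then show ?thesis using NS True by (simp add: K_def algebra_simps)
  next
    case False
    have lo: "(\<lambda>j. - c * (N0 - N1) * (ds * v (Suc j))) sums (- c * (N0 - N1) * M1)" by (intro sums_mult vm)
    have "- c * (N0 - N1) * M1 \<le> N1 - suminf B" using sums_le[OF Alow lo sA] False by simp
    then have "suminf A \<ge> - c * (N0 - N1) * M1" using sums_unique[OF sA] by simp
    then show ?thesis using NS False by (simp add: K_def algebra_simps)
  qed
  have NN: "\<bar>N1 - N0\<bar> \<le> (dt * P * T + dt * P * P * M1) / K"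
    using Nd absS K by (simp add: field_simps)
  show ?thesis
  proof
    show "summable (\<lambda>j. \<bar>v (Suc j) - v j\<bar>)" by (rule sV)
    have "(\<Sum>j. \<bar>v (Suc j) - v j\<bar>) \<le> T + (dt * P * T + dt * P * P * M1) / K + dt * (P * P + L) * M1"
      using TV NN by linarith
    also have "\<dots> = (1 + dt * (P / K)) * T + dt * ((P*P + L) * M1 + P*P*M1/K)"
      using K by (simp add: field_simps)
    finally show "(\<Sum>j. \<bar>v (Suc j) - v j\<bar>) \<le> (1 + dt * (P / (1 - c*M1))) * (\<Sum>j. \<bar>u (Suc j) - u j\<bar>)
        + dt * ((P*P + L) * M1 + P*P*M1/(1 - c*M1))" by (simp add: T_def K_def)
  qed
qed

lemma arith_step:
  fixes T T' T0 E q a C1 C2 Cp dt :: real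
  assumes T: "0 \<le> T" "T \<le> E * T0 + C2 * (E - 1)" and T0: "T0 \<ge> 0" and E: "E \<ge> 1"
    and T': "T' \<le> (1 + dt * a) * T + dt * Cp" and a: "0 \<le> a" "a \<le> C1" and C1: "C1 > 0"
    and Cp: "Cp \<ge> 0" and C2: "C2 \<ge> Cp / C1" and dt: "dt > 0" and q: "q \<ge> 1 + C1 * dt"
  shows "T' \<le> (E * q) * T0 + C2 * (E * q - 1)"
proof -
  have C2n: "C2 \<ge> 0" using C2 Cp C1 by (smt (verit) divide_nonneg_pos)
  have "T' \<le> (1 + dt * C1) * T + dt * Cp"
    using T' mult_right_mono[of "1 + dt * a" "1 + dt * C1" T] a dt T(1) by (smt (verit) mult_left_mono)
  also have "\<dots> \<le> q * T + dt * Cp" using mult_right_mono[OF q T(1)] by (simp add: mult.commute)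
  also have "\<dots> \<le> q * (E * T0 + C2 * (E - 1)) + dt * Cp"
    using T(2) q C1 dt by (smt (verit) mult_left_mono mult_pos_pos)
  also have "\<dots> \<le> (E * q) * T0 + C2 * (E * q - 1)"
  proof -
    have "dt * Cp \<le> C2 * (C1 * dt)"
      using C2 C1 dt by (simp add: divide_le_eq mult.commute mult.left_commute mult_left_mono)
    also have "\<dots> \<le> C2 * (q - 1)" using q C2n by (simp add: mult_left_mono)
    finally have "dt * Cp \<le> C2 * (q - 1)" .
    then show ?thesis by (simp add: algebra_simps)
  qed
  finally show ?thesis .
qed

lemma scheme_main:
  fixes n :: "nat \<Rightarrow> nat \<Rightarrow> real" and N :: "nat \<Rightarrow> real" and p :: "real \<Rightarrow> real \<Rightarrow> real"
  assumes ds: "ds > 0" and dt: "dt > 0" and cfl: "dt * (1/ds + P) \<le> 1"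
    and P: "P \<ge> 0" and L: "L \<ge> 0" and c: "c \<ge> 0" and cM: "c * M1 < 1"
    and pb: "\<And>s N. s > 0 \<Longrightarrow> N \<ge> 0 \<Longrightarrow> 0 \<le> p s N \<and> p s N \<le> P"
    and pl: "\<And>s s' N. s > 0 \<Longrightarrow> s' > 0 \<Longrightarrow> N \<ge> 0 \<Longrightarrow> \<bar>p s N - p s' N\<bar> \<le> L * \<bar>s - s'\<bar>"
    and slope: "M1 > 0 \<Longrightarrow> (\<And>s N N'. s > 0 \<Longrightarrow> 0 \<le> N \<Longrightarrow> N \<le> N' \<Longrightarrow> p s N' - p s N \<le> c * (N' - N))"
    and n0nn: "\<forall>j\<ge>1. n 0 j \<ge> 0"
    and mass0: "(\<lambda>j. ds * \<bar>n 0 (Suc j)\<bar>) sums M1"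
    and Nfix: "\<forall>k. N k \<ge> 0 \<and> (\<lambda>j. ds * p (sgrid ds (Suc j)) (N k) * n k (Suc j)) sums N k"
    and nN: "\<forall>k. n k 0 = N k"
    and sch: "\<forall>k. \<forall>j\<ge>1. n (Suc k) j = n k j - dt / ds * (n k j - n k (j - 1)) - dt * p (sgrid ds j) (N k) * n k j"
    and tv0: "discTV (n 0) < \<infinity>"
  defines "C1 \<equiv> P / (1 - c * M1) + 1"
      and "C2 \<equiv> ((P*P + L) * M1 + P*P*M1/(1 - c*M1)) / (P / (1 - c * M1) + 1) + 1"
  shows "discTV (n m) \<le> ennreal (exp (C1 * (real m * dt))) * discTV (n 0)
                      + ennreal (C2 * (exp (C1 * (real m * dt)) - 1))"
proof -
  define K where "K = 1 - c * M1"
  have K: "K > 0" using cM by (simp add: K_def)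
  define Cp where "Cp = (P*P + L) * M1 + P*P*M1/K"
  have M1: "M1 \<ge> 0"
  proof -
    have z: "(\<lambda>j. 0::real) sums 0" by simp
    show ?thesis using sums_le[OF _ z mass0] ds by simp
  qed
  have Cp: "Cp \<ge> 0" using P L M1 K by (simp add: Cp_def)
  have PK: "P / (1 - c*M1) \<ge> 0" using P K by (simp add: K_def)
  have C1: "C1 > 0" unfolding C1_def using PK by linarith
  have C2: "C2 \<ge> Cp / C1" unfolding C2_def C1_def Cp_def K_def by linarith
  let ?TV = "\<lambda>k. \<Sum>j. \<bar>n k (Suc j) - n k j\<bar>"
  have tvpos: "0 \<le> \<bar>n 0 (Suc j) - n 0 j\<bar>" for j by simp
  have s0: "summable (\<lambda>j. \<bar>n 0 (Suc j) - n 0 j\<bar>)"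
    by (rule summable_suminf_not_top) (use tv0 in \<open>auto simp: discTV_def\<close>)
  define T0 where "T0 = ?TV 0"
  have T0: "T0 \<ge> 0" unfolding T0_def using s0 by (simp add: suminf_nonneg)
  have inv: "(\<forall>j\<ge>1. n k j \<ge> 0) \<and> (\<lambda>j. ds * n k (Suc j)) sums M1 \<and>
             summable (\<lambda>j. \<bar>n k (Suc j) - n k j\<bar>) \<and>
             ?TV k \<le> exp (C1 * (real k * dt)) * T0 + C2 * (exp (C1 * (real k * dt)) - 1)" for k
  proof (induction k)
    case 0
    have "(\<lambda>j. ds * n 0 (Suc j)) sums M1" using mass0 n0nn by simp
    then show ?case using n0nn s0 by (simp add: T0_def)
  next
    case (Suc k)
    have nn: "\<forall>j\<ge>1. n k j \<ge> 0" and ms: "(\<lambda>j. ds * n k (Suc j)) sums M1"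
      and sm: "summable (\<lambda>j. \<bar>n k (Suc j) - n k j\<bar>)"
      and bd: "?TV k \<le> exp (C1 * (real k * dt)) * T0 + C2 * (exp (C1 * (real k * dt)) - 1)"
      using Suc.IH by auto
    have schk: "\<forall>j\<ge>1. n (Suc k) j = n k j - dt / ds * (n k j - n k (j - 1)) - dt * p (sgrid ds j) (N k) * n k j"
      using sch by blast
    have Nk: "N k \<ge> 0" "(\<lambda>j. ds * p (sgrid ds (Suc j)) (N k) * n k (Suc j)) sums N k"
      using Nfix by blast+
    have Nk1: "N (Suc k) \<ge> 0" "(\<lambda>j. ds * p (sgrid ds (Suc j)) (N (Suc k)) * n (Suc k) (Suc j)) sums N (Suc k)"
      using Nfix by blast+
    have B: "(\<forall>j\<ge>1. n (Suc k) j \<ge> 0)" "(\<lambda>j. ds * n (Suc k) (Suc j)) sums M1"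
      using step_basic[where p=p and u="n k" and v="n (Suc k)" and ?N0.0="N k" and ?M1.0=M1, OF ds dt cfl pb nN[rule_format, of k] Nk(1) nn ms Nk(2) schk] by blast+
    have TVs: "summable (\<lambda>j. \<bar>n (Suc k) (Suc j) - n (Suc k) j\<bar>) \<and>
      ?TV (Suc k) \<le> (1 + dt * (P / (1 - c*M1))) * ?TV k + dt * ((P*P + L) * M1 + P*P*M1/(1 - c*M1))"
      by (rule step_TV[where p=p and u="n k" and v="n (Suc k)" and ?N0.0="N k" and ?N1.0="N (Suc k)" and ?M1.0=M1, OF ds dt cfl P L c cM pb pl slope nN[rule_format, of k] Nk(1) nn ms Nk(2)
          nN[rule_format, of "Suc k"] Nk1(1) B(1) B(2) Nk1(2) schk sm])
    have E: "exp (C1 * (real k * dt)) \<ge> 1" using C1 dt by simp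
    have q: "exp (C1 * dt) \<ge> 1 + C1 * dt" by (rule exp_ge_add_one_self)
    have a: "0 \<le> P / K" "P / K \<le> C1" using P K by (auto simp: C1_def K_def)
    have "?TV (Suc k) \<le> (exp (C1 * (real k * dt)) * exp (C1 * dt)) * T0 + C2 * (exp (C1 * (real k * dt)) * exp (C1 * dt) - 1)"
      by (rule arith_step[OF _ bd T0 E _ a C1 Cp C2 dt q])
         (use sm TVs in \<open>auto simp: suminf_nonneg K_def Cp_def\<close>)
    moreover have "exp (C1 * (real k * dt)) * exp (C1 * dt) = exp (C1 * (real (Suc k) * dt))"
      by (simp add: exp_add[symmetric] algebra_simps)
    ultimately show ?case using B TVs by simp
  qed
  have e: "discTV (n k) = ennreal (?TV k)" for k
    unfolding discTV_def using inv[of k] by (simp add: suminf_ennreal2)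
  have E: "exp (C1 * (real m * dt)) \<ge> 1" using C1 dt by simp
  have C2n: "C2 \<ge> 0" using C2 Cp C1 by (smt (verit) divide_nonneg_pos)
  have "discTV (n m) \<le> ennreal (exp (C1 * (real m * dt)) * T0 + C2 * (exp (C1 * (real m * dt)) - 1))"
    unfolding e using inv[of m] by (simp add: ennreal_leI)
  also have "\<dots> = ennreal (exp (C1 * (real m * dt))) * discTV (n 0) + ennreal (C2 * (exp (C1 * (real m * dt)) - 1))"
    using T0 E C2n by (simp add: e T0_def ennreal_plus[symmetric] ennreal_mult)
  finally show ?thesis .
qed

theorem mainTheorem6:
  fixes p :: "real \<Rightarrow> real \<Rightarrow> real" and M1 Minf :: real
  assumes p_bdd: "bounded ((\<lambda>x. p (fst x) (snd x)) ` quadrant)"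
      and p_lip: "\<exists>L. L-lipschitz_on quadrant (\<lambda>x. p (fst x) (snd x))"
      and p_nonneg: "\<forall>s\<ge>0. \<forall>N\<ge>0. p s N \<ge> 0"
      and small: "gammaP p * ereal M1 < 1"
  shows "\<exists>C1 C2. C1 > 0 \<and> C2 > 0 \<and>
    (\<forall>ds dt (n :: nat \<Rightarrow> nat \<Rightarrow> real) (N :: nat \<Rightarrow> real) m.
       ds > 0 \<longrightarrow> dt > 0 \<longrightarrow>
       dt \<le> 1 / (1 / ds + supnormP p) \<longrightarrow>
       (\<forall>j\<ge>1. n 0 j \<ge> 0) \<longrightarrow>
       (\<lambda>j. ds * \<bar>n 0 (Suc j)\<bar>) sums M1 \<longrightarrow>
       bdd_above (range (\<lambda>j. \<bar>n 0 (Suc j)\<bar>)) \<longrightarrow>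
       (SUP j. \<bar>n 0 (Suc j)\<bar>) = Minf \<longrightarrow>
       (\<forall>k. N k \<ge> 0 \<and>
            (\<lambda>j. ds * p (sgrid ds (Suc j)) (N k) * n k (Suc j)) sums N k) \<longrightarrow>
       (\<forall>k. n k 0 = N k) \<longrightarrow>
       (\<forall>k. \<forall>j\<ge>1. n (Suc k) j = n k j - dt / ds * (n k j - n k (j - 1))
                                   - dt * p (sgrid ds j) (N k) * n k j) \<longrightarrow>
       discTV (n 0) < \<infinity> \<longrightarrow>
       discTV (n m) \<le> ennreal (exp (C1 * (real m * dt))) * discTV (n 0)
                      + ennreal (C2 * (exp (C1 * (real m * dt)) - 1)))"
proof (cases "M1 < 0")
  case True
  show ?thesis
  proof (intro exI[of _ 1] conjI allI impI)
    fix ds dt :: real and n :: "nat \<Rightarrow> nat \<Rightarrow> real" and m :: nat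
    assume ds: "ds > 0" and ms: "(\<lambda>j. ds * \<bar>n 0 (Suc j)\<bar>) sums M1"
    have z: "(\<lambda>j. 0::real) sums 0" by simp
    have "0 \<le> M1" using sums_le[OF _ z ms] ds by simp
    then show "discTV (n m) \<le> ennreal (exp (1 * (real m * dt))) * discTV (n 0) + ennreal (1 * (exp (1 * (real m * dt)) - 1))"
      using True by simp
  qed simp_all
next
  case False
  then have M1: "M1 \<ge> 0" by simp
  obtain L where lipq: "L-lipschitz_on quadrant (\<lambda>x. p (fst x) (snd x))" using p_lip by blast
  have L: "L \<ge> 0" using lipq by (simp add: lipschitz_on_def)
  have lipAll: "\<bar>p (fst x) (snd x) - p (fst y) (snd y)\<bar> \<le> L * dist x y"
    if "x \<in> quadrant" "y \<in> quadrant" for x y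
    using lipq that unfolding lipschitz_on_def dist_real_def by blast
  have pl: "\<bar>p s N - p s' N\<bar> \<le> L * \<bar>s - s'\<bar>" if "s > 0" "s' > 0" "N \<ge> 0" for s s' N
    using lipAll[of "(s, N)" "(s', N)"] that by (simp add: quadrant_def dist_same_snd)
  define P where "P = supnormP p"
  have bdd: "bdd_above ((\<lambda>x. \<bar>p (fst x) (snd x)\<bar>) ` quadrant)"
  proof -
    obtain B where "\<forall>y \<in> (\<lambda>x. p (fst x) (snd x)) ` quadrant. \<bar>y\<bar> \<le> B"
      using p_bdd bounded_real by blast
    then show ?thesis by (auto simp: bdd_above_def)
  qed
  have pP: "\<bar>p s N\<bar> \<le> P" if "s \<ge> 0" "N \<ge> 0" for s N
  proof -
    have "(s, N) \<in> quadrant" using that by (simp add: quadrant_def)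
    then show ?thesis unfolding P_def supnormP_def using cSUP_upper[OF _ bdd] by fastforce
  qed
  have P: "P \<ge> 0" using pP[of 0 0] by simp
  have pb: "0 \<le> p s N \<and> p s N \<le> P" if "s > 0" "N \<ge> 0" for s N
    using p_nonneg pP[of s N] that by auto
  obtain c where c: "c \<ge> 0" "c * M1 < 1" "M1 > 0 \<Longrightarrow> gammaP p < ereal c"
  proof (cases "M1 > 0")
    case False
    then show thesis using that[of 0] by simp
  next
    case Mpos: True
    show thesis
    proof (cases "gammaP p")
      case (real g)
      then have "g * M1 < 1" using small by simp
      then have g: "g < 1 / M1" using Mpos by (simp add: field_simps)
      define c where "c = (max g 0 + 1 / M1) / 2"
      have "c \<ge> 0" using Mpos by (simp add: c_def)
      moreover have "c < 1 / M1"
      proof -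
        have "0 < 1 / M1" using Mpos by simp
        then have "max g 0 < 1 / M1" using g by simp
        moreover have "(a + b) / 2 < b" if "a < b" for a b :: real using that by simp
        ultimately show ?thesis unfolding c_def by blast
      qed
      then have "c * M1 < 1" using Mpos by (simp add: field_simps)
      moreover have "g < c" using g Mpos by (simp add: c_def)
      ultimately show thesis using that[of c] real by simp
    next
      case PInf
      then show thesis using small Mpos by simp
    next
      case MInf
      have "(1 / (2 * M1)) * M1 < 1" using Mpos by simp
      then show thesis using that[of "1 / (2 * M1)"] MInf Mpos by simp
    qed
  qed
  have slope: "p s N' - p s N \<le> c * (N' - N)"
    if "M1 > 0" "s > 0" "0 \<le> N" "N \<le> N'" for s N N'
    by (rule slope_from_gamma[OF lipq c(3)[OF that(1)] that(2-4)])
  define K where "K = 1 - c * M1"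
  have K: "K > 0" using c by (simp add: K_def)
  define C1 where "C1 = P / (1 - c * M1) + 1"
  define C2 where "C2 = ((P*P + L) * M1 + P*P*M1/(1 - c*M1)) / (P / (1 - c * M1) + 1) + 1"
  have C1: "C1 > 0" using P K by (simp add: C1_def K_def[symmetric] add_nonneg_pos)
  have C2: "C2 > 0"
  proof -
    have "((P*P + L) * M1 + P*P*M1/K) / (P / K + 1) \<ge> 0"
      using P L M1 K by (intro divide_nonneg_nonneg add_nonneg_nonneg mult_nonneg_nonneg) auto
    then show ?thesis unfolding C2_def K_def by linarith
  qed
  show ?thesis
  proof (rule exI[of _ C1], rule exI[of _ C2], intro conjI C1 C2 allI impI)
    fix ds dt :: real and n :: "nat \<Rightarrow> nat \<Rightarrow> real" and N :: "nat \<Rightarrow> real" and m :: nat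
    assume ds: "ds > 0" and dt: "dt > 0" and cfl: "dt \<le> 1 / (1 / ds + supnormP p)"
      and n0nn: "\<forall>j\<ge>1. n 0 j \<ge> 0" and mass0: "(\<lambda>j. ds * \<bar>n 0 (Suc j)\<bar>) sums M1"
      and "bdd_above (range (\<lambda>j. \<bar>n 0 (Suc j)\<bar>))" and "(SUP j. \<bar>n 0 (Suc j)\<bar>) = Minf"
      and Nfix: "\<forall>k. N k \<ge> 0 \<and> (\<lambda>j. ds * p (sgrid ds (Suc j)) (N k) * n k (Suc j)) sums N k"
      and nN: "\<forall>k. n k 0 = N k"
      and sch: "\<forall>k. \<forall>j\<ge>1. n (Suc k) j = n k j - dt / ds * (n k j - n k (j - 1)) - dt * p (sgrid ds j) (N k) * n k j"
      and tv0: "discTV (n 0) < \<infinity>"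
    have pos: "1 / ds + P > 0" using ds P by (simp add: add_pos_nonneg)
    have cfl': "dt * (1 / ds + P) \<le> 1" using cfl pos by (simp add: P_def le_divide_eq)
    show "discTV (n m) \<le> ennreal (exp (C1 * (real m * dt))) * discTV (n 0)
                      + ennreal (C2 * (exp (C1 * (real m * dt)) - 1))"
      unfolding C1_def C2_def
      apply (rule scheme_main[where p=p and n=n and N=N, OF ds dt cfl' P L c(1) c(2) pb pl slope n0nn mass0 Nfix nN sch tv0])
      by simp_all
  qed
qed

end
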